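(* For every state $(S_i)_{i\in\mathbb Z}$ of the box-basket-ball system, the state obtained by the carrier description of $T_\infty$ coincides with the state obtained by the combinatorial description of the time evolution (both as defined in the context).
   Context: Box-basket-ball system (BBBS). A site state is a triple $(a,b,c)$ of nonnegative integers with $a=b-c+1$; it models a site containing one box, $b$ baskets and $c$ balls, where each box or basket holds at most one ball (balls are placed in the box first whenever possible), so $a$ is the number of unoccupied boxes/baskets and $\min(a,b)$ is the number of empty baskets. Write $V=(1,0,0)$ (vacuum). A state is a sequence $(S_i)_{i\in\mathbb Z}$ of site states with $S_i=V$ for all but finitely many $i$. Carrier description of $T_\infty$: a carrier, initially in state $(\infty,0,0)$, passes through the sites from left ($i\to-\infty$) to right; when the carrier in state $(\infty,b,c)$ meets the site $S_i=(d,e,f)$, the site becomes $S_i'=(d',e',f')$ and the carrier becomes $(\infty,b',c')$, where $d'=d+b+f-\min(e+c,d+c,d+b)$, $e'=e+b-\min(d,e)$, $f'=\min(e+c,d+c,d+b)-\min(d,e)$, $b'=\min(d,e)$, $c'=c+f+\min(d,e)-\min(e+c,d+c,d+b)$. The new state is $(S_i')_{i\in\mathbb Z}$. Combinatorial description: first, every empty basket is moved from its site $i$ to site $i+1$ (full baskets are not moved); second, the balls are considered one at a time from left to right, and each ball is moved to the nearest currently unoccupied box or basket located at a site strictly to its right; each ball is moved exactly once. *)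

theory Defs
  imports Main
begin

text \<open>Site states (a,b,c): a = unoccupied boxes/baskets, b = baskets, c = balls.\<close>
type_synonym site = "int \<times> int \<times> int"
type_synonym bstate = "int \<Rightarrow> site"

definition vac :: site where "vac = (1, 0, 0)"

definition valid_site :: "site \<Rightarrow> bool" where
  "valid_site s = (case s of (a, b, c) \<Rightarrow> a \<ge> 0 \<and> b \<ge> 0 \<and> c \<ge> 0 \<and> a = b - c + 1)"

definition is_state :: "bstate \<Rightarrow> bool" where
  "is_state S = ((\<forall>i. valid_site (S i)) \<and> finite {i. S i \<noteq> vac})"

definition support :: "bstate \<Rightarrow> int set" where
  "support S = {i. S i \<noteq> vac}"

text \<open>The carrier (\<infinity>,b,c) is represented by the pair (b,c). One local interaction:
  site (d,e,f) and carrier (b,c) give new site and new carrier.\<close>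
definition carrier_step :: "site \<Rightarrow> int \<times> int \<Rightarrow> site \<times> (int \<times> int)" where
  "carrier_step s bc = (case s of (d, e, f) \<Rightarrow> case bc of (b, c) \<Rightarrow>
     (let m = min (e + c) (min (d + c) (d + b)); k = min d e in
      ((d + b + f - m, e + b - k, m - k), (k, c + f + k - m))))"

text \<open>Leftmost non-vacuum site; the carrier starts in state (\<infinity>,0,0) and, as it
  passes vacuum sites unchanged, we may start it at this site.\<close>
definition lo :: "bstate \<Rightarrow> int" where
  "lo S = (if support S = {} then 0 else Min (support S))"

fun carr_iter :: "bstate \<Rightarrow> int \<Rightarrow> nat \<Rightarrow> int \<times> int" where
  "carr_iter S L 0 = (0, 0)"
| "carr_iter S L (Suc n) = snd (carrier_step (S (L + int n)) (carr_iter S L n))"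

definition carrier_before :: "bstate \<Rightarrow> int \<Rightarrow> int \<times> int" where
  "carrier_before S i = carr_iter S (lo S) (nat (i - lo S))"

definition T_carrier :: "bstate \<Rightarrow> bstate" where
  "T_carrier S i = fst (carrier_step (S i) (carrier_before S i))"

definition empty_baskets :: "site \<Rightarrow> int" where
  "empty_baskets s = (case s of (a, b, c) \<Rightarrow> min a b)"

definition baskets :: "site \<Rightarrow> int" where
  "baskets s = fst (snd s)"

definition balls :: "site \<Rightarrow> int" where
  "balls s = snd (snd s)"

text \<open>Step 1: empty baskets move one site to the right.  Number of baskets at site i
  afterwards, and number of unoccupied boxes/baskets (containers minus balls) at site i.\<close>
definition baskets1 :: "bstate \<Rightarrow> int \<Rightarrow> int" where
  "baskets1 S i = baskets (S i) - empty_baskets (S i) + empty_baskets (S (i - 1))"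

definition free1 :: "bstate \<Rightarrow> int \<Rightarrow> int" where
  "free1 S i = 1 + baskets1 S i - balls (S i)"

definition ball_list :: "bstate \<Rightarrow> int list" where
  "ball_list S = concat (map (\<lambda>i. replicate (nat (balls (S i))) i)
                          (sorted_list_of_set (support S)))"

text \<open>Moving one ball located at site p: it goes to the nearest site strictly to the
  right having an unoccupied box/basket.\<close>
definition move_ball :: "int \<Rightarrow> (int \<Rightarrow> int) \<times> (int \<Rightarrow> int) \<Rightarrow> (int \<Rightarrow> int) \<times> (int \<Rightarrow> int)" where
  "move_ball p st = (case st of (free, landed) \<Rightarrow>
     (let j = p + 1 + int (LEAST n. free (p + 1 + int n) > 0) in
      (((free(p := free p + 1))(j := free j - 1)), landed(j := landed j + 1))))"

definition T_comb :: "bstate \<Rightarrow> bstate" where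
  "T_comb S i = (let landed = snd (fold move_ball (ball_list S) (free1 S, \<lambda>_. 0))
                 in (baskets1 S i - landed i + 1, baskets1 S i, landed i))"

end

theory Submission
  imports Defs
begin

fun gfill :: "(int \<Rightarrow> int) \<Rightarrow> int \<Rightarrow> int \<Rightarrow> nat \<Rightarrow> int" where
  "gfill F c p 0 = c"
| "gfill F c p (Suc n) = gfill F c p n - min (gfill F c p n) (F (p + int n))"

definition fill :: "(int \<Rightarrow> int) \<Rightarrow> int \<Rightarrow> int \<Rightarrow> int \<Rightarrow> int" where
  "fill F c p j = min (gfill F c p (nat (j - p))) (F j)"

lemma gfill_nonneg: "c \<ge> 0 \<Longrightarrow> gfill F c p n \<ge> 0"
  by (induction n) auto

lemma gfill_shift: "gfill F c p (Suc n) = gfill F (c - min c (F p)) (p+1) n"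
  by (induction n) (auto simp: algebra_simps)

lemma gfill_add_before:
  assumes "\<forall>m<q. gfill F c p m \<ge> F (p + int m)" "n \<le> q"
  shows "gfill F (c+1) p n = gfill F c p n + 1"
  using assms(2)
proof (induction n)
  case (Suc n)
  then have "gfill F c p n \<ge> F (p + int n)" using assms(1) by auto
  with Suc show ?case by (simp add: min_def)
qed simp

lemma gfill_add_after:
  assumes "\<forall>m<q. gfill F c p m \<ge> F (p + int m)" "gfill F c p q < F (p + int q)" "c \<ge> 0"
    "\<forall>j. F j \<ge> 0"
  shows "n > q \<Longrightarrow> gfill F (c+1) p n = 0 \<and> gfill F c p n = 0"
proof (induction n)
  case (Suc n)
  show ?case
  proof (cases "n = q")
    case True
    have "gfill F (c+1) p q = gfill F c p q + 1" using gfill_add_before[OF assms(1)] by simp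
    moreover have "gfill F c p q \<ge> 0" using gfill_nonneg assms(3) by blast
    ultimately show ?thesis using True assms(2) by (simp add: min_def)
  next
    case False
    then have "n > q" using Suc by simp
    with Suc show ?thesis using assms(4) by simp
  qed
qed simp

lemma gfill_exists:
  assumes "c \<ge> 0" "\<forall>j. F j \<ge> 0" "\<forall>j\<ge>H. F j \<ge> 1"
  shows "\<exists>q. gfill F c p q < F (p + int q)"
proof (rule ccontr)
  assume "\<not> ?thesis"
  hence A: "\<forall>q. gfill F c p q \<ge> F (p + int q)" by (auto simp: not_less)
  define M where "M = nat (H - p)"
  have B: "gfill F c p (M + n) \<le> gfill F c p M - int n" for n
  proof (induction n)
    case (Suc n)
    have "p + int (M+n) \<ge> H" using M_def by auto
    hence "F (p + int (M+n)) \<ge> 1" using assms(3) by auto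
    with A[rule_format, of "M+n"] Suc show ?case by (simp add: min_def)
  qed simp
  define g where "g = gfill F c p M"
  have g0: "g \<ge> 0" using gfill_nonneg[OF assms(1)] g_def by blast
  have X: "gfill F c p (M + (nat g + 1)) \<ge> 0" using gfill_nonneg[OF assms(1)] by blast
  have Y: "gfill F c p (M + (nat g + 1)) \<le> g - int (nat g + 1)" using B g_def by blast
  have "int (nat g + 1) = g + 1" using g0 by simp
  with X Y show False by linarith
qed

definition Inv :: "(int \<Rightarrow> int) \<Rightarrow> (int \<Rightarrow> int) \<Rightarrow> int \<Rightarrow> int \<Rightarrow> (int \<Rightarrow> int) \<times> (int \<Rightarrow> int) \<Rightarrow> bool" where
  "Inv F C p c st = ((\<forall>j<p. snd st j = min (C j) (F j)) \<and>
     (\<forall>j\<ge>p. snd st j = fill F c p j \<and> fst st j = F j - snd st j))"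

lemma Inv_ball:
  assumes inv: "Inv F C (p+1) c st" and c: "c \<ge> 0" and F0: "\<forall>j. F j \<ge> 0" and FH: "\<forall>j\<ge>H. F j \<ge> 1"
  shows "Inv F C (p+1) (c+1) (move_ball p st)"
proof -
  obtain free landed where st: "st = (free, landed)" by (cases st)
  have ex: "\<exists>q. gfill F c (p+1) q < F (p + 1 + int q)" using gfill_exists[OF c F0 FH] by simp
  define q where "q = (LEAST n. free (p + 1 + int n) > 0)"
  have fr: "free (p+1+int n) > 0 \<longleftrightarrow> gfill F c (p+1) n < F (p+1+int n)" for n
    using inv st by (auto simp: Inv_def fill_def min_def)
  have ex2: "\<exists>n. free (p+1+int n) > 0" using ex fr by blast
  have q1: "gfill F c (p+1) q < F (p+1+int q)"
    using LeastI_ex[OF ex2] fr q_def by blast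
  have q2: "\<forall>m<q. gfill F c (p+1) m \<ge> F (p+1+int m)"
    using not_less_Least[of _ "\<lambda>n. free (p + 1 + int n) > 0"] fr q_def by (meson not_less)
  have mb: "move_ball p st = ((free(p := free p + 1))(p+1+int q := free (p+1+int q) - 1),
       landed(p+1+int q := landed (p+1+int q) + 1))"
    by (simp add: move_ball_def st q_def Let_def)
  show ?thesis unfolding Inv_def mb fst_conv snd_conv
  proof (intro conjI allI impI)
    fix j assume "j < p+1"
    then show "(landed(p+1+int q := landed (p+1+int q) + 1)) j = min (C j) (F j)"
      using inv st by (simp add: Inv_def)
  next
    fix j assume j: "j \<ge> p+1"
    define n where "n = nat (j - (p+1))"
    have jn: "j = p+1+int n" using j n_def by simp
    have lj: "landed j = fill F c (p+1) j" "free j = F j - landed j" using inv st j by (auto simp: Inv_def)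
    have key: "fill F (c+1) (p+1) j = (if n = q then fill F c (p+1) j + 1 else fill F c (p+1) j)"
    proof -
      have nn: "nat (j - (p+1)) = n" using n_def by simp
      have Fj: "F j = F (p+1+int n)" using jn by simp
      have fd: "fill F c' (p+1) j = min (gfill F c' (p+1) n) (F (p+1+int n))" for c'
        by (simp only: fill_def nn Fj)
      consider "n < q" | "n = q" | "n > q" by linarith
      then show ?thesis
      proof cases
        case 1
        then show ?thesis using gfill_add_before[OF q2, of n] q2[rule_format, of n] by (simp add: fd min_def)
      next
        case 2
        then show ?thesis using gfill_add_before[OF q2, of n] q1 by (simp add: fd min_def)
      next
        case 3
        then show ?thesis using gfill_add_after[OF q2 q1 c F0, of n] by (simp add: fd)
      qed
    qed
    have jp: "j \<noteq> p" using j by simp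
    show "(landed(p+1+int q := landed (p+1+int q) + 1)) j = fill F (c+1) (p+1) j"
      using key lj jn by auto
    show "((free(p := free p + 1))(p+1+int q := free (p+1+int q) - 1)) j =
        F j - (landed(p+1+int q := landed (p+1+int q) + 1)) j"
      using lj jp by auto
  qed
qed

lemma Inv_balls:
  assumes "Inv F C (p+1) c st" "c \<ge> 0" "\<forall>j. F j \<ge> 0" "\<forall>j\<ge>H. F j \<ge> 1"
  shows "Inv F C (p+1) (c + int k) (fold move_ball (replicate k p) st)"
  using assms(1,2)
proof (induction k arbitrary: c st)
  case (Suc k)
  have "Inv F C (p+1) (c+1) (move_ball p st)" using Inv_ball[OF Suc.prems assms(3,4)] .
  from Suc.IH[OF this] Suc.prems(2) show ?case by (simp add: algebra_simps)
qed simp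

lemma Inv_conv:
  assumes "Inv F C p (C p) st"
  shows "Inv F C (p+1) (C p - min (C p) (F p)) st"
  unfolding Inv_def
proof (intro conjI allI impI)
  fix j :: int assume "j < p+1"
  then show "snd st j = min (C j) (F j)"
    using assms by (cases "j = p") (auto simp: Inv_def fill_def)
next
  fix j assume j: "j \<ge> p+1"
  have "nat (j - p) = Suc (nat (j - (p+1)))" using j by simp
  then have "fill F (C p) p j = fill F (C p - min (C p) (F p)) (p+1) j"
    by (simp only: fill_def gfill_shift)
  then show "snd st j = fill F (C p - min (C p) (F p)) (p + 1) j"
    using assms j by (auto simp: Inv_def)
  show "fst st j = F j - snd st j"
    using assms j by (auto simp: Inv_def)
qed

lemma Inv_loop:
  assumes "Inv F C L (C L) st0" "\<forall>i. C (i+1) = C i - min (C i) (F i) + f i" "\<forall>i. f i \<ge> 0"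
    "\<forall>j. F j \<ge> 0" "\<forall>j\<ge>H. F j \<ge> 1"
  shows "Inv F C (L + int N) (C (L + int N))
     (fold (\<lambda>i. fold move_ball (replicate (nat (f i)) i)) (map (\<lambda>n. L + int n) [0..<N]) st0)"
proof (induction N)
  case 0
  then show ?case using assms(1) by simp
next
  case (Suc N)
  define p where "p = L + int N"
  have c: "C p - min (C p) (F p) \<ge> 0" by simp
  have "Inv F C (p+1) (C p - min (C p) (F p) + int (nat (f p)))
     (fold move_ball (replicate (nat (f p)) p)
       (fold (\<lambda>i. fold move_ball (replicate (nat (f i)) i)) (map (\<lambda>n. L + int n) [0..<N]) st0))"
  proof -
    have i1: "Inv F C p (C p) (fold (\<lambda>i. fold move_ball (replicate (nat (f i)) i)) (map (\<lambda>n. L + int n) [0..<N]) st0)"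
      using Suc p_def by simp
    show ?thesis using Inv_balls[OF Inv_conv[OF i1] c assms(4,5)] .
  qed
  moreover have "C p - min (C p) (F p) + int (nat (f p)) = C (p+1)" using assms(2,3) by simp
  ultimately show ?case by (simp add: p_def algebra_simps)
qed

lemma Inv_final:
  assumes "Inv F C P (C P) st" "\<forall>i\<ge>P. C (i+1) = C i - min (C i) (F i)"
  shows "snd st j = min (C j) (F j)"
proof (cases "j < P")
  case True then show ?thesis using assms by (simp add: Inv_def)
next
  case False
  have g: "gfill F (C P) P n = C (P + int n)" for n
  proof (induction n)
    case (Suc n)
    then show ?case using assms(2)[rule_format, of "P + int n"] by (simp add: algebra_simps)
  qed simp
  have "j = P + int (nat (j - P))" using False by simp
  then have "fill F (C P) P j = min (C j) (F j)" unfolding fill_def using g by metis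
  then show ?thesis using assms(1) False by (simp add: Inv_def)
qed


lemma gfill_zero: "\<forall>j. F j \<ge> 0 \<Longrightarrow> gfill F 0 p n = 0"
  by (induction n) auto

lemma fold_concat_map: "fold g (concat (map h xs)) s = fold (\<lambda>i. fold g (h i)) xs s"
  by (induction xs arbitrary: s) auto

lemma concat_filter_nil: "(\<And>x. \<not> P x \<Longrightarrow> h x = []) \<Longrightarrow> concat (map h (filter P xs)) = concat (map h xs)"
  by (induction xs) auto

lemma arith_rec: "d = e - ff + 1 \<Longrightarrow>
  (c::int) + ff + min d e - min (e+c) (min (d+c) (d+b)) = c - min c (1 + (e - min d e + b) - ff) + ff"
  by (simp add: min_def)

lemma arith_land: "d = e - ff + 1 \<Longrightarrow>
  min (c::int) (1 + (e - min d e + b) - ff) = min (e+c) (min (d+c) (d+b)) - min d e"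
  by (simp add: min_def)

lemma site_unpack: "valid_site s \<Longrightarrow> \<exists>d e f. s = (d,e,f) \<and> d \<ge> 0 \<and> e \<ge> 0 \<and> f \<ge> 0 \<and> d = e - f + 1"
  by (cases s) (auto simp: valid_site_def)

theorem mainTheorem2:
  fixes S :: bstate
  assumes "is_state S"
  shows "T_carrier S = T_comb S"
proof -
  have valid: "\<And>i. valid_site (S i)" and fin: "finite (support S)"
    using assms by (auto simp: is_state_def support_def)
  define L where "L = lo S"
  define H where "H = Max (insert L (support S))"
  have below: "S j = vac" if "j < L" for j
  proof (rule ccontr)
    assume "S j \<noteq> vac"
    then have "j \<in> support S" by (simp add: support_def)
    then have "L \<le> j" using fin by (auto simp: L_def lo_def)
    with that show False by simp
  qed
  have above: "S j = vac" if "j > H" for j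
  proof (rule ccontr)
    assume "S j \<noteq> vac"
    then have "j \<in> support S" by (simp add: support_def)
    then have "j \<le> H" using fin by (simp add: H_def)
    with that show False by simp
  qed
  have LH: "L \<le> H" using fin by (simp add: H_def)
  have suppLH: "support S \<subseteq> {L..H}"
  proof
    fix j assume "j \<in> support S"
    then have "S j \<noteq> vac" by (simp add: support_def)
    then show "j \<in> {L..H}" using below above by force
  qed
  define F where "F = free1 S"
  define f where "f = (\<lambda>i. balls (S i))"
  define C where "C = (\<lambda>i. snd (carrier_before S i))"
  have step: "carrier_before S (i+1) = snd (carrier_step (S i) (carrier_before S i))" for i
  proof (cases "i \<ge> L")
    case True
    then have "nat (i + 1 - L) = Suc (nat (i - L))" by simp
    moreover have "L + int (nat (i - L)) = i" using True by simp
    ultimately show ?thesis unfolding carrier_before_def L_def[symmetric] by simp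
  next
    case False
    then have "S i = vac" using below by simp
    moreover have "nat (i+1-L) = 0" "nat (i - L) = 0" using False by auto
    ultimately show ?thesis unfolding carrier_before_def L_def[symmetric]
      by (simp add: carrier_step_def vac_def)
  qed
  have fstC: "fst (carrier_before S i) = empty_baskets (S (i-1))" for i
  proof (cases "i \<le> L")
    case True
    then have "nat (i - L) = 0" by simp
    moreover have "S (i-1) = vac" using below True by simp
    ultimately show ?thesis unfolding carrier_before_def L_def[symmetric]
      by (simp add: empty_baskets_def vac_def)
  next
    case False
    have e: "carrier_before S i = snd (carrier_step (S (i-1)) (carrier_before S (i-1)))"
      using step[of "i-1"] by simp
    obtain d e ff where s: "S (i-1) = (d,e,ff)" by (cases "S (i-1)") auto
    obtain b c where bc: "carrier_before S (i-1) = (b,c)" by (cases "carrier_before S (i-1)") auto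
    show ?thesis using e s bc by (simp add: carrier_step_def Let_def empty_baskets_def)
  qed
  have C0: "C i = 0" if "i \<le> L" for i
    using that unfolding C_def carrier_before_def L_def[symmetric] by simp
  have Crec: "\<forall>i. C (i+1) = C i - min (C i) (F i) + f i"
  proof
    fix i
    obtain d e ff where s: "S i = (d,e,ff)" and v: "d = e - ff + 1"
      using site_unpack[OF valid[of i]] by blast
    obtain b c where bc: "carrier_before S i = (b,c)" by (cases "carrier_before S i") auto
    have b: "b = empty_baskets (S (i-1))" using fstC[of i] bc by simp
    have "C (i+1) = c + ff + min d e - min (e+c) (min (d+c) (d+b))"
      using step[of i] s bc by (simp add: C_def carrier_step_def Let_def)
    also have "\<dots> = c - min c (1 + (e - min d e + b) - ff) + ff" using arith_rec[OF v] .
    finally show "C (i+1) = C i - min (C i) (F i) + f i"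
      using s bc b by (simp add: C_def F_def f_def free1_def baskets1_def baskets_def
          balls_def empty_baskets_def)
  qed
  have F0: "\<forall>j. F j \<ge> 0"
  proof
    fix j
    obtain d e ff where s: "S j = (d,e,ff)" and v: "d \<ge> 0" "e \<ge> 0" "ff \<ge> 0" "d = e - ff + 1"
      using site_unpack[OF valid[of j]] by blast
    obtain d' e' ff' where s': "S (j-1) = (d',e',ff')" and v': "d' \<ge> 0" "e' \<ge> 0"
      using site_unpack[OF valid[of "j-1"]] by blast
    show "F j \<ge> 0" using s s' v v'
      by (simp add: F_def free1_def baskets1_def baskets_def balls_def empty_baskets_def min_def)
  qed
  have FH: "\<forall>j\<ge>H+2. F j \<ge> 1"
  proof (intro allI impI)
    fix j :: int assume "j \<ge> H+2"
    then have "S j = vac" "S (j-1) = vac" using above by auto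
    then show "F j \<ge> 1"
      by (simp add: F_def free1_def baskets1_def baskets_def balls_def empty_baskets_def vac_def)
  qed
  have f0: "\<forall>i. f i \<ge> 0"
  proof
    fix i
    show "f i \<ge> 0" using site_unpack[OF valid[of i]] by (auto simp: f_def balls_def)
  qed
  have fH: "f i = 0" if "i > H" for i
    using above[OF that] by (simp add: f_def balls_def vac_def)
  have fnot: "f i = 0" if "i \<notin> support S" for i
    using that by (simp add: f_def balls_def vac_def support_def)
  define N where "N = nat (H - L + 1)"
  define xs where "xs = map (\<lambda>n. L + int n) [0..<N]"
  have setxs: "set xs = {L..H}"
  proof
    show "set xs \<subseteq> {L..H}" using LH by (auto simp: xs_def N_def)
    show "{L..H} \<subseteq> set xs"
    proof
      fix x assume x: "x \<in> {L..H}"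
      then have "x = L + int (nat (x - L))" "nat (x - L) < N" by (auto simp: N_def)
      then show "x \<in> set xs" unfolding xs_def by (metis atLeastLessThan_iff image_eqI le0 set_map set_upt)
    qed
  qed
  have sw: "sorted_wrt (<) xs"
    unfolding xs_def sorted_wrt_map by (rule sorted_wrt_mono_rel[OF _ sorted_wrt_upt]) auto
  have sl: "sorted_list_of_set (support S) = filter (\<lambda>i. i \<in> support S) xs"
  proof -
    have "set (filter (\<lambda>i. i \<in> support S) xs) = support S" using setxs suppLH by auto
    moreover have "sorted_wrt (<) (filter (\<lambda>i. i \<in> support S) xs)" using sorted_wrt_filter[OF sw] .
    ultimately show ?thesis
      by (metis sorted_list_of_set_sort_remdups strict_sorted_iff sorted_sort_id distinct_remdups_id)
  qed
  have bl: "ball_list S = concat (map (\<lambda>i. replicate (nat (f i)) i) xs)"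
    unfolding ball_list_def sl f_def by (rule concat_filter_nil) (simp add: fnot[unfolded f_def])
  define st where "st = fold move_ball (ball_list S) (free1 S, \<lambda>_. 0)"
  have st2: "st = fold (\<lambda>i. fold move_ball (replicate (nat (f i)) i)) (map (\<lambda>n. L + int n) [0..<N]) (F, \<lambda>_. 0)"
    unfolding st_def bl fold_concat_map xs_def F_def ..
  have base: "Inv F C L (C L) (F, \<lambda>_. 0)"
    using C0 F0 gfill_zero[OF F0] by (auto simp: Inv_def fill_def)
  have loop: "Inv F C (L + int N) (C (L + int N)) st"
    unfolding st2 by (rule Inv_loop[OF base Crec f0 F0 FH])
  have LN: "L + int N = H + 1" using LH by (simp add: N_def)
  have land: "snd st j = min (C j) (F j)" for j
  proof (rule Inv_final)
    show "Inv F C (H+1) (C (H+1)) st" using loop LN by simp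
    show "\<forall>i\<ge>H+1. C (i+1) = C i - min (C i) (F i)" using Crec fH by auto
  qed
  show ?thesis
  proof
    fix i
    obtain d e ff where s: "S i = (d,e,ff)" and v: "d = e - ff + 1"
      using site_unpack[OF valid[of i]] by blast
    obtain b c where bc: "carrier_before S i = (b,c)" by (cases "carrier_before S i") auto
    have b: "b = empty_baskets (S (i-1))" using fstC[of i] bc by simp
    have li: "snd st i = min (e+c) (min (d+c) (d+b)) - min d e"
      using land[of i] arith_land[OF v, of c b] s bc b
      by (simp add: C_def F_def free1_def baskets1_def baskets_def balls_def empty_baskets_def)
    have "T_comb S i = (e - min d e + b - snd st i + 1, e - min d e + b, snd st i)"
      unfolding T_comb_def st_def[symmetric] Let_def using s b
      by (simp add: baskets1_def baskets_def empty_baskets_def)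
    also have "\<dots> = T_carrier S i"
      unfolding T_carrier_def using s bc li v by (simp add: carrier_step_def Let_def)
    finally show "T_carrier S i = T_comb S i" ..
  qed
qed

end
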